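(* Let $L\ge2$, $k\ge2$, $\Lambda=\{1,\dots,L\}^2$, $\widetilde\Lambda=\{L\}\times\{1,\dots,L\}$, $\mathbf v=((1,1),(L,1))\in\Lambda^2$, and $W_k=\{\mathbf v\mathbf u:\mathbf u\in\widetilde\Lambda^{k-2}\}\subset\Lambda^k$ (concatenation of strings). Let $\lambda_1,\lambda_2,\dots$ be independent random variables taking values in $\Lambda$, and let $A_m$ be the event $(\lambda_m,\dots,\lambda_{m+k-1})\in W_k$. Then for every finite $I\subset\mathbb{N}$, \[ \mathbb{P}\Bigl[\bigcap_{i\in I}A_i^c\Bigr]\le\prod_{i\in I}\mathbb{P}[A_i^c]. \] *)

theory Defs
  imports "HOL-Probability.Probability"
begin

definition Lam :: "nat \<Rightarrow> (nat \<times> nat) set" where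
  "Lam L = {1..L} \<times> {1..L}"

definition Lamt :: "nat \<Rightarrow> (nat \<times> nat) set" where
  "Lamt L = {L} \<times> {1..L}"

definition Wk :: "nat \<Rightarrow> nat \<Rightarrow> (nat \<times> nat) list set" where
  "Wk L k = {[(1,1),(L,1)] @ u | u. length u = k - 2 \<and> set u \<subseteq> Lamt L}"

definition evA :: "'s measure \<Rightarrow> (nat \<Rightarrow> 's \<Rightarrow> nat \<times> nat) \<Rightarrow> nat \<Rightarrow> nat \<Rightarrow> nat \<Rightarrow> 's set" where
  "evA M X L k m = {\<omega> \<in> space M. map (\<lambda>j. X (m + j) \<omega>) [0..<k] \<in> Wk L k}"

end

theory Submission
  imports Defs
begin

definition SS :: "nat \<Rightarrow> nat \<Rightarrow> (nat \<times> nat) set" where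
  "SS L j = (if j = 0 then {(1,1)} else if j = 1 then {(L,1)} else Lamt L)"

lemma Wk_iff:
  assumes "k \<ge> 2"
  shows "map f [0..<k] \<in> Wk L k \<longleftrightarrow> (\<forall>j<k. f j \<in> SS L j)"
proof
  assume "map f [0..<k] \<in> Wk L k"
  then obtain u where u: "map f [0..<k] = [(1,1),(L,1)] @ u" "set u \<subseteq> Lamt L"
    unfolding Wk_def by auto
  show "\<forall>j<k. f j \<in> SS L j"
  proof (intro allI impI)
    fix j assume j: "j < k"
    have "f j = (map f [0..<k]) ! j" using j by simp
    also have "\<dots> = ([(1,1),(L,1)] @ u) ! j" using u by simp
    finally have fj: "f j = ([(1,1),(L,1)] @ u) ! j" .
    have "length u = k - 2" using arg_cong[OF u(1), of length] assms by simp
    show "f j \<in> SS L j"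
    proof (cases "j < 2")
      case True then show ?thesis using fj by (cases j) (auto simp: SS_def nth_append)
    next
      case False
      then have "u ! (j-2) \<in> set u" using j \<open>length u = k - 2\<close> by simp
      moreover have "f j = u ! (j-2)" using fj False by (simp add: nth_append numeral_2_eq_2)
      ultimately show ?thesis using u(2) False by (auto simp: SS_def)
    qed
  qed
next
  assume h: "\<forall>j<k. f j \<in> SS L j"
  have up: "[0..<k] = [0,1] @ [2..<k]" using assms
    by (metis One_nat_def Suc_1 append_Cons append_Nil less_2_cases_iff less_le_trans pos2 upt_conv_Cons zero_less_Suc)
  have "f 0 = (1,1)" using h[rule_format, of 0] assms by (simp add: SS_def)
  moreover have "f 1 = (L,1)" using h[rule_format, of 1] assms by (simp add: SS_def)
  moreover have "set (map f [2..<k]) \<subseteq> Lamt L" using h by (auto simp: SS_def)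
  ultimately show "map f [0..<k] \<in> Wk L k" unfolding Wk_def using up by auto
qed

lemma evA_alt:
  assumes "k \<ge> 2"
  shows "evA M X L k m = {\<omega>\<in>space M. \<forall>j<k. X (m+j) \<omega> \<in> SS L j}"
  unfolding evA_def using Wk_iff[OF assms, of "\<lambda>j. X (m+j) _"] by auto


lemma pred_comp_mem:
  assumes "f \<in> measurable N (count_space UNIV)"
  shows "Measurable.pred N (\<lambda>x. f x \<in> S)"
proof -
  have "{x\<in>space N. f x \<in> S} = f -` S \<inter> space N" by auto
  then have "{x\<in>space N. f x \<in> S} \<in> sets N" using measurable_sets[OF assms, of S] by simp
  then show ?thesis by (simp add: Measurable.pred_def)
qed

theorem lemma4p15:
  fixes M :: "'s measure" and X :: "nat \<Rightarrow> 's \<Rightarrow> nat \<times> nat"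
    and L k :: nat and I :: "nat set"
  assumes "prob_space M"
    and "L \<ge> 2" and "k \<ge> 2"
    and "prob_space.indep_vars M (\<lambda>_. count_space UNIV) X {1..}"
    and "\<And>i \<omega>. i \<ge> 1 \<Longrightarrow> \<omega> \<in> space M \<Longrightarrow> X i \<omega> \<in> Lam L"
    and "finite I" and "I \<subseteq> {1..}"
  shows "measure M {\<omega> \<in> space M. \<forall>i\<in>I. \<omega> \<notin> evA M X L k i}
           \<le> (\<Prod>i\<in>I. measure M (space M - evA M X L k i))"
proof -
  interpret P: prob_space M by fact
  note ind = assms(4)
  have rv: "X i \<in> measurable M (count_space UNIV)" if "i \<ge> 1" for i
    using ind that unfolding P.indep_vars_def by auto
  define E where "E S = {\<omega>\<in>space M. \<forall>i\<in>S. \<not> (\<forall>j\<in>{..<k}. X (i+j) \<omega> \<in> SS L j)}" for S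
  define Ev where "Ev m = {\<omega>\<in>space M. \<forall>j\<in>{..<k}. X (m+j) \<omega> \<in> SS L j}" for m
  have evA_eq: "evA M X L k m = Ev m" for m
    unfolding evA_alt[OF assms(3)] Ev_def by auto
  have Eeq: "{\<omega> \<in> space M. \<forall>i\<in>S. \<omega> \<notin> evA M X L k i} = E S" for S
    unfolding evA_eq Ev_def E_def by auto
  have Ev_sets: "Ev m \<in> P.events" if "m \<ge> 1" for m
  proof -
    have "Measurable.pred M (\<lambda>\<omega>. \<forall>j\<in>{..<k}. X (m+j) \<omega> \<in> SS L j)"
      using that by (intro pred_intros_finite(3) pred_comp_mem rv) auto
    then show ?thesis unfolding Ev_def by (simp add: Measurable.pred_def)
  qed
  have E_sets: "E S \<in> P.events" if "finite S" "S \<subseteq> {1..}" for S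
  proof -
    have "E S = space M - (\<Union>i\<in>S. Ev i)" unfolding E_def Ev_def by auto
    moreover have "(\<Union>i\<in>S. Ev i) \<in> P.events" using that Ev_sets by (intro sets.finite_UN) auto
    ultimately show ?thesis by auto
  qed
  have main: "measure M (E S) \<le> (\<Prod>i\<in>S. measure M (space M - Ev i))"
    if "finite S" "S \<subseteq> {1..}" for S
    using that
  proof (induction S rule: finite_linorder_max_induct)
    case empty
    then show ?case by simp
  next
    case (insert b A)
    have A1: "A \<subseteq> {1..}" and b1: "b \<ge> 1" using insert.prems by auto
    have bA: "b \<notin> A" using insert.hyps(2) by auto
    define A2 where "A2 = {a\<in>A. a + k \<le> b}"
    have A2s: "A2 \<subseteq> A" unfolding A2_def by auto
    have finA2: "finite A2" using insert.hyps(1) A2s finite_subset by blast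
    have A21: "A2 \<subseteq> {1..}" using A2s A1 by auto
    have h1: "E (insert b A) = E A - Ev b" unfolding E_def Ev_def by auto
    have excl: "\<not> (\<forall>j\<in>{..<k}. X (a+j) \<omega> \<in> SS L j)"
      if "\<omega> \<in> Ev b" "a < b" "b < a + k" for a \<omega>
    proof
      assume h: "\<forall>j\<in>{..<k}. X (a+j) \<omega> \<in> SS L j"
      have xb: "X b \<omega> = (1,1)" using that(1) assms(3) unfolding Ev_def
        by (auto simp: SS_def dest!: bspec[where x=0])
      have "X b \<omega> \<in> SS L (b-a)" using h[rule_format, of "b-a"] that by simp
      then show False using xb that assms(2) by (auto simp: SS_def Lamt_def split: if_splits)
    qed
    have h2: "E A \<inter> Ev b = E A2 \<inter> Ev b"
    proof
      show "E A \<inter> Ev b \<subseteq> E A2 \<inter> Ev b" using A2s unfolding E_def by auto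
      show "E A2 \<inter> Ev b \<subseteq> E A \<inter> Ev b"
      proof
        fix \<omega> assume w: "\<omega> \<in> E A2 \<inter> Ev b"
        have "\<not> (\<forall>j\<in>{..<k}. X (a+j) \<omega> \<in> SS L j)" if "a \<in> A" for a
        proof (cases "a + k \<le> b")
          case True then show ?thesis using w that unfolding E_def A2_def by auto
        next
          case False then show ?thesis using excl[of \<omega> a] w that insert.hyps(2) by auto
        qed
        then show "\<omega> \<in> E A \<inter> Ev b" using w unfolding E_def Ev_def by auto
      qed
    qed
    have h3: "measure M (E A2 \<inter> Ev b) = measure M (E A2) * measure M (Ev b)"
    proof -
      define N where "N = (\<lambda>_::nat. count_space (UNIV :: (nat \<times> nat) set))"
      define Y1 where "Y1 = (\<lambda>\<omega>. restrict (\<lambda>i. X i \<omega>) {1..<b})"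
      define Y2 where "Y2 = (\<lambda>\<omega>. restrict (\<lambda>i. X i \<omega>) {b..<b+k})"
      have iv: "P.indep_var (PiM {1..<b} N) Y1 (PiM {b..<b+k} N) Y2"
        unfolding Y1_def Y2_def N_def using b1
        by (intro P.indep_var_restrict[OF ind]) auto
      define Xa where "Xa = {x\<in>space (PiM {1..<b} N). \<forall>a\<in>A2. \<not> (\<forall>j\<in>{..<k}. x (a+j) \<in> SS L j)}"
      define Xb where "Xb = {x\<in>space (PiM {b..<b+k} N). \<forall>j\<in>{..<k}. x (b+j) \<in> SS L j}"
      have cA: "a + j \<in> {1..<b}" if "a \<in> A2" "j < k" for a j
        using that A21 unfolding A2_def by auto
      have XaS: "Xa \<in> sets (PiM {1..<b} N)"
      proof -
        have "Measurable.pred (PiM {1..<b} N) (\<lambda>x. \<forall>a\<in>A2. \<not> (\<forall>j\<in>{..<k}. x (a+j) \<in> SS L j))"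
        proof (intro pred_intros_finite(3) finA2)
          fix a assume a: "a \<in> A2"
          have a1: "a \<ge> 1" "a + k \<le> b" using a A21 unfolding A2_def by auto
          have "Measurable.pred (PiM {1..<b} N) (\<lambda>x. \<forall>j\<in>{..<k}. x (a+j) \<in> SS L j)"
            using a1 by (intro pred_intros_finite(3) pred_comp_mem) (auto simp: N_def intro!: measurable_component_singleton[where M=N, simplified N_def])
          then show "Measurable.pred (PiM {1..<b} N) (\<lambda>x. \<not> (\<forall>j\<in>{..<k}. x (a+j) \<in> SS L j))"
            by (rule pred_intros_logic)
        qed
        then show ?thesis unfolding Xa_def by (simp add: Measurable.pred_def)
      qed
      have XbS: "Xb \<in> sets (PiM {b..<b+k} N)"
      proof -
        have "Measurable.pred (PiM {b..<b+k} N) (\<lambda>x. \<forall>j\<in>{..<k}. x (b+j) \<in> SS L j)"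
          by (intro pred_intros_finite(3) pred_comp_mem) (auto simp: N_def intro!: measurable_component_singleton[where M=N, simplified N_def])
        then show ?thesis unfolding Xb_def by (simp add: Measurable.pred_def)
      qed
      have e1: "Y1 -` Xa \<inter> space M = E A2"
        unfolding Y1_def Xa_def E_def using cA by (auto simp: space_PiM N_def)
      have e2: "Y2 -` Xb \<inter> space M = Ev b"
        unfolding Y2_def Xb_def Ev_def by (auto simp: space_PiM N_def)
      have e3: "(\<lambda>x. (Y1 x, Y2 x)) -` (Xa \<times> Xb) \<inter> space M = E A2 \<inter> Ev b"
        using e1 e2 by auto
      show ?thesis using P.indep_varD[OF iv XaS XbS] unfolding e1 e2 e3 .
    qed
    have h4: "measure M (E A) \<le> measure M (E A2)"
      using A2s E_sets[OF finA2 A21] unfolding E_def by (intro P.finite_measure_mono) auto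
    have "measure M (E (insert b A)) = measure M (E A) - measure M (E A \<inter> Ev b)"
      unfolding h1 using E_sets[OF insert.hyps(1) A1] Ev_sets[OF b1]
      by (rule P.finite_measure_Diff')
    also have "\<dots> = measure M (E A) - measure M (E A2) * measure M (Ev b)"
      using h2 h3 by simp
    also have "\<dots> \<le> measure M (E A) - measure M (E A) * measure M (Ev b)"
      using h4 by (simp add: mult_right_mono)
    also have "\<dots> = measure M (E A) * measure M (space M - Ev b)"
      unfolding P.prob_compl[OF Ev_sets[OF b1]] by (simp add: right_diff_distrib)
    also have "\<dots> \<le> (\<Prod>i\<in>A. measure M (space M - Ev i)) * measure M (space M - Ev b)"
      using insert.IH[OF A1] by (simp add: mult_right_mono)
    also have "\<dots> = (\<Prod>i\<in>insert b A. measure M (space M - Ev i))"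
      using insert.hyps(1) bA by (simp add: mult.commute)
    finally show ?case .
  qed
  show ?thesis using main[OF assms(6,7)] unfolding Eeq[symmetric] evA_eq[symmetric] .
qed

end
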